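(* Suppose $\mu_i\in\Pr(\mathbb{T})$ ($i\in\omega$) satisfy $\mu_i\,\hat{}\,\mu_i=\mu_i$, and there are sets $E_i\subseteq\mathbb{T}$ ($i\in\omega$) with $\mu_i(E_j)=1$ if $i=j$ and $\mu_i(E_j)=0$ otherwise. Then no limit point of $\{\mu_i:i\in\omega\}$ (in the weak* topology on $\Pr(\mathbb{T})$) is idempotent, i.e. every such limit point $\mu$ satisfies $\mu\,\hat{}\,\mu\neq\mu$.
   Context: For $a,b\subseteq(0,1]$ put $a\,\hat{}\,b=\tfrac12 a\cup\tfrac12(b+1)$; $\mathbb{T}$ is the set generated from $\mathbf{1}=\{1\}$ by $\hat{}$ (free binary system on one generator). $\Pr(\mathbb{T})$ is the set of finitely additive probability measures on $\mathbb{T}$, viewed as positive normalized functionals on $\ell^\infty(\mathbb{T})$ with the weak* topology; $(\mu\,\hat{}\,\nu)(f)=\int\int f(x\,\hat{}\,y)\,d\nu(y)\,d\mu(x)$. *)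

theory Defs
  imports "HOL-Analysis.Analysis"
begin

definition hat :: "real set \<Rightarrow> real set \<Rightarrow> real set" where
  "hat a b = (\<lambda>x. x / 2) ` a \<union> (\<lambda>x. (x + 1) / 2) ` b"

text \<open>The free binary system generated by {1}.\<close>
inductive_set TT :: "real set set" where
  one: "{1} \<in> TT"
| hat: "a \<in> TT \<Longrightarrow> b \<in> TT \<Longrightarrow> hat a b \<in> TT"

definition linf :: "(real set \<Rightarrow> real) set" where
  "linf = {f. bounded (f ` TT) \<and> (\<forall>x. x \<notin> TT \<longrightarrow> f x = 0)}"

text \<open>Pr(TT): positive normalised linear functionals on linf
  (canonically extended by 0 outside linf).\<close>
definition PrT :: "((real set \<Rightarrow> real) \<Rightarrow> real) set" where
  "PrT = {\<phi>. (\<forall>f\<in>linf. \<forall>g\<in>linf. \<phi> (\<lambda>x. f x + g x) = \<phi> f + \<phi> g)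
          \<and> (\<forall>c. \<forall>f\<in>linf. \<phi> (\<lambda>x. c * f x) = c * \<phi> f)
          \<and> (\<forall>f\<in>linf. (\<forall>x\<in>TT. f x \<ge> 0) \<longrightarrow> \<phi> f \<ge> 0)
          \<and> \<phi> (indicator TT) = 1
          \<and> (\<forall>f. f \<notin> linf \<longrightarrow> \<phi> f = 0)}"

definition conv :: "((real set \<Rightarrow> real) \<Rightarrow> real) \<Rightarrow> ((real set \<Rightarrow> real) \<Rightarrow> real)
    \<Rightarrow> ((real set \<Rightarrow> real) \<Rightarrow> real)" where
  "conv \<mu> \<nu> f = (if f \<in> linf then
      \<mu> (\<lambda>x. if x \<in> TT then \<nu> (\<lambda>y. if y \<in> TT then f (hat x y) else 0) else 0)
    else 0)"

definition meas :: "((real set \<Rightarrow> real) \<Rightarrow> real) \<Rightarrow> real set set \<Rightarrow> real" where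
  "meas \<mu> E = \<mu> (indicator E)"

end

theory Submission
  imports Defs
begin

lemma open_coord:
  assumes "open (S::real set)"
  shows "open {\<nu>::(real set \<Rightarrow> real) \<Rightarrow> real. \<nu> f \<in> S}"
proof -
  have "open ((\<lambda>\<nu>::(real set \<Rightarrow> real) \<Rightarrow> real. \<nu> f) -` S \<inter> UNIV)"
    using continuous_on_open_vimage[of UNIV "\<lambda>\<nu>::(real set \<Rightarrow> real) \<Rightarrow> real. \<nu> f"] assms
    by simp
  then show ?thesis by (simp add: vimage_def)
qed

lemma linfI:
  assumes "\<And>x. x \<in> TT \<Longrightarrow> \<bar>f x\<bar> \<le> B" "\<And>x. x \<notin> TT \<Longrightarrow> f x = 0"
  shows "f \<in> linf"
  unfolding linf_def bounded_iff using assms by auto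

lemma linfE:
  assumes "f \<in> linf"
  obtains B where "\<And>x. x \<in> TT \<Longrightarrow> \<bar>f x\<bar> \<le> B" "\<And>x. x \<notin> TT \<Longrightarrow> f x = 0"
  using assms unfolding linf_def bounded_iff by auto

lemma linf_diff:
  assumes "f \<in> linf" "g \<in> linf"
  shows "(\<lambda>x. g x - f x) \<in> linf"
proof -
  obtain B where B: "\<And>x. x \<in> TT \<Longrightarrow> \<bar>f x\<bar> \<le> B" "\<And>x. x \<notin> TT \<Longrightarrow> f x = 0"
    using assms(1) linfE by blast
  obtain C where C: "\<And>x. x \<in> TT \<Longrightarrow> \<bar>g x\<bar> \<le> C" "\<And>x. x \<notin> TT \<Longrightarrow> g x = 0"
    using assms(2) linfE by blast
  show ?thesis
  proof (rule linfI[where B="B + C"])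
    fix x assume "x \<in> TT"
    then show "\<bar>g x - f x\<bar> \<le> B + C" using B(1)[of x] C(1)[of x] by linarith
  next
    fix x assume "x \<notin> TT"
    then show "g x - f x = 0" using B C by simp
  qed
qed

lemma linf_add:
  assumes "f \<in> linf" "g \<in> linf"
  shows "(\<lambda>x. f x + g x) \<in> linf"
proof -
  obtain B where B: "\<And>x. x \<in> TT \<Longrightarrow> \<bar>f x\<bar> \<le> B" "\<And>x. x \<notin> TT \<Longrightarrow> f x = 0"
    using assms(1) linfE by blast
  obtain C where C: "\<And>x. x \<in> TT \<Longrightarrow> \<bar>g x\<bar> \<le> C" "\<And>x. x \<notin> TT \<Longrightarrow> g x = 0"
    using assms(2) linfE by blast
  show ?thesis
  proof (rule linfI[where B="B + C"])
    fix x assume "x \<in> TT"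
    then show "\<bar>f x + g x\<bar> \<le> B + C" using B(1)[of x] C(1)[of x] by linarith
  next
    fix x assume "x \<notin> TT"
    then show "f x + g x = 0" using B C by simp
  qed
qed

lemma ind_linf: "A \<subseteq> TT \<Longrightarrow> (indicator A :: real set \<Rightarrow> real) \<in> linf"
  by (rule linfI[where B=1]) (auto simp: indicator_def)

lemma zero_linf: "(\<lambda>_. 0::real) \<in> linf"
  by (rule linfI[where B=0]) auto

lemma PrT_add: "\<phi> \<in> PrT \<Longrightarrow> f \<in> linf \<Longrightarrow> g \<in> linf \<Longrightarrow> \<phi> (\<lambda>x. f x + g x) = \<phi> f + \<phi> g"
  unfolding PrT_def by simp

lemma PrT_scale: "\<phi> \<in> PrT \<Longrightarrow> f \<in> linf \<Longrightarrow> \<phi> (\<lambda>x. c * f x) = c * \<phi> f"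
  unfolding PrT_def by simp

lemma PrT_pos: "\<phi> \<in> PrT \<Longrightarrow> f \<in> linf \<Longrightarrow> (\<And>x. x \<in> TT \<Longrightarrow> f x \<ge> 0) \<Longrightarrow> \<phi> f \<ge> 0"
  unfolding PrT_def by simp

lemma PrT_zero: "\<phi> \<in> PrT \<Longrightarrow> \<phi> (\<lambda>_. 0) = 0"
  using PrT_scale[OF _ zero_linf, of \<phi> 0] by simp

lemma PrT_mono:
  assumes "\<phi> \<in> PrT" "f \<in> linf" "g \<in> linf" "\<And>x. x \<in> TT \<Longrightarrow> f x \<le> g x"
  shows "\<phi> f \<le> \<phi> g"
proof -
  have d: "(\<lambda>x. g x - f x) \<in> linf" using linf_diff assms by blast
  have "\<phi> (\<lambda>x. f x + (g x - f x)) = \<phi> f + \<phi> (\<lambda>x. g x - f x)"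
    using PrT_add[OF assms(1,2) d] .
  moreover have "\<phi> (\<lambda>x. g x - f x) \<ge> 0"
    using PrT_pos[OF assms(1) d] assms(4) by simp
  ultimately show ?thesis by simp
qed

lemma meas_ge0: "\<phi> \<in> PrT \<Longrightarrow> A \<subseteq> TT \<Longrightarrow> meas \<phi> A \<ge> 0"
  unfolding meas_def using PrT_pos[OF _ ind_linf[of A]] by (auto simp: indicator_def)

lemma meas_mono: "\<phi> \<in> PrT \<Longrightarrow> A \<subseteq> B \<Longrightarrow> B \<subseteq> TT \<Longrightarrow> meas \<phi> A \<le> meas \<phi> B"
  unfolding meas_def
  by (rule PrT_mono[OF _ ind_linf ind_linf]) (auto simp: indicator_def)

lemma meas_Un:
  assumes "\<phi> \<in> PrT" "A \<subseteq> TT" "B \<subseteq> TT"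
  shows "meas \<phi> (A \<union> B) \<le> meas \<phi> A + meas \<phi> B"
proof -
  have s: "(\<lambda>x. indicator A x + indicator B x :: real) \<in> linf"
    using linf_add ind_linf assms by blast
  have "\<phi> (indicator (A \<union> B)) \<le> \<phi> (\<lambda>x. indicator A x + indicator B x)"
    by (rule PrT_mono[OF assms(1) ind_linf s]) (use assms in \<open>auto simp: indicator_def\<close>)
  also have "\<dots> = \<phi> (indicator A) + \<phi> (indicator B)"
    using PrT_add[OF assms(1) ind_linf ind_linf] assms(2,3) by (simp add: indicator_def)
  finally show ?thesis unfolding meas_def .
qed

lemma meas_UN:
  fixes n :: nat and A :: "nat \<Rightarrow> real set set"
  assumes "\<phi> \<in> PrT" "\<And>j. A j \<subseteq> TT"
  shows "meas \<phi> (\<Union>j<n. A j) \<le> (\<Sum>j<n. meas \<phi> (A j))"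
proof (induction n)
  case 0
  have "(indicator {} :: real set \<Rightarrow> real) = (\<lambda>_. 0)" by (auto simp: fun_eq_iff)
  then show ?case using PrT_zero[OF assms(1)] by (simp add: meas_def)
next
  case (Suc n)
  have "meas \<phi> (\<Union>j<Suc n. A j) = meas \<phi> (A n \<union> (\<Union>j<n. A j))"
    by (simp add: lessThan_Suc)
  also have "\<dots> \<le> meas \<phi> (A n) + meas \<phi> (\<Union>j<n. A j)"
    by (rule meas_Un) (use assms in auto)
  also have "\<dots> \<le> (\<Sum>j<Suc n. meas \<phi> (A j))" using Suc by simp
  finally show ?case .
qed

lemma TT_sub: "a \<in> TT \<Longrightarrow> a \<subseteq> {0<..1}"
  by (induction rule: TT.induct) (auto simp: hat_def)

lemma hat_left:
  assumes "a \<subseteq> {0<..1}" "b \<subseteq> {0<..1}"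
  shows "a = (\<lambda>z. 2*z) ` (hat a b \<inter> {..1/2})"
proof -
  have "hat a b \<inter> {..1/2} = (\<lambda>x. x/2) ` a"
    using assms by (auto simp: hat_def)
  then show ?thesis by (simp add: image_image)
qed

lemma hat_right:
  assumes "a \<subseteq> {0<..1}" "b \<subseteq> {0<..1}"
  shows "b = (\<lambda>z. 2*z - 1) ` (hat a b \<inter> {1/2<..})"
proof -
  have "hat a b \<inter> {1/2<..} = (\<lambda>x. (x+1)/2) ` b"
    using assms by (force simp: hat_def)
  moreover have e: "(\<lambda>x::real. 2 * ((x + 1) / 2) - 1) = (\<lambda>x. x)" by (auto simp: field_simps)
  ultimately show ?thesis by (simp only: image_image e image_ident)
qed

lemma hat_inj:
  assumes "a \<in> TT" "b \<in> TT" "c \<in> TT" "d \<in> TT" "hat a b = hat c d"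
  shows "a = c \<and> b = d"
  using hat_left[OF TT_sub TT_sub, of a b] hat_left[OF TT_sub TT_sub, of c d]
    hat_right[OF TT_sub TT_sub, of a b] hat_right[OF TT_sub TT_sub, of c d] assms
  by metis

lemma inner:
  assumes F: "\<And>j. F j \<subseteq> TT" and disj: "\<And>x j k. x \<in> F j \<Longrightarrow> x \<in> F k \<Longrightarrow> j = k"
    and x: "x \<in> TT"
  shows "(\<lambda>y. if y \<in> TT then (indicator {hat u v | u v j. u \<in> F j \<and> v \<in> F j} (hat x y) :: real) else 0)
     = (\<lambda>y. if \<exists>j. x \<in> F j \<and> y \<in> F j then 1 else 0)"
proof
  fix y
  show "(if y \<in> TT then (indicator {hat u v | u v j. u \<in> F j \<and> v \<in> F j} (hat x y) :: real) else 0)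
     = (if \<exists>j. x \<in> F j \<and> y \<in> F j then 1 else 0)"
  proof (cases "y \<in> TT")
    case True
    have "hat x y \<in> {hat u v | u v j. u \<in> F j \<and> v \<in> F j} \<longleftrightarrow> (\<exists>j. x \<in> F j \<and> y \<in> F j)"
    proof
      assume "hat x y \<in> {hat u v | u v j. u \<in> F j \<and> v \<in> F j}"
      then obtain u v j where "hat x y = hat u v" "u \<in> F j" "v \<in> F j" by blast
      moreover have "u \<in> TT" "v \<in> TT" using F calculation by auto
      ultimately show "\<exists>j. x \<in> F j \<and> y \<in> F j" using hat_inj[of x y u v] x True by auto
    qed blast
    then show ?thesis using True by (simp add: indicator_def)
  next
    case False
    then show ?thesis using F by auto
  qed
qed

lemma conv_G:
  assumes "\<phi> \<in> PrT" and F: "\<And>j. F j \<subseteq> TT" and disj: "\<And>x j k. x \<in> F j \<Longrightarrow> x \<in> F k \<Longrightarrow> j = k"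
  shows "conv \<phi> \<phi> (indicator {hat u v | u v j. u \<in> F j \<and> v \<in> F j}) =
    \<phi> (\<lambda>x. if x \<in> TT then \<phi> (\<lambda>y. if \<exists>j. x \<in> F j \<and> y \<in> F j then 1 else 0) else 0)"
proof -
  have G: "{hat u v | u v j. u \<in> F j \<and> v \<in> F j} \<subseteq> TT"
    using F by (auto intro: TT.hat)
  show ?thesis
    unfolding conv_def using ind_linf[OF G] inner[OF F disj]
    by (simp cong: if_cong)
qed

lemma inner_ind:
  assumes disj: "\<And>x j k. x \<in> F j \<Longrightarrow> x \<in> F k \<Longrightarrow> j = k" and "x \<in> F j"
  shows "(\<lambda>y. if \<exists>j. x \<in> F j \<and> y \<in> F j then 1 else 0) = (indicator (F j) :: real set \<Rightarrow> real)"
  using assms by (auto simp: indicator_def fun_eq_iff)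

lemma inner_zero:
  assumes "\<forall>j. x \<notin> F j"
  shows "(\<lambda>y. if \<exists>j. x \<in> F j \<and> y \<in> F j then 1 else (0::real)) = (\<lambda>_. 0)"
  using assms by auto

lemma limpt_avoid:
  fixes mu :: "nat \<Rightarrow> ((real set \<Rightarrow> real) \<Rightarrow> real)"
  assumes "\<mu> islimpt range mu" "open U" "\<mu> \<in> U"
  shows "\<exists>i. i \<noteq> j \<and> mu i \<in> U"
proof (cases "\<mu> = mu j")
  case True
  then obtain y where "y \<in> range mu" "y \<in> U" "y \<noteq> \<mu>"
    using assms unfolding islimpt_def by blast
  then show ?thesis using True by auto
next
  case False
  then obtain f where f: "\<mu> f \<noteq> mu j f" by (auto simp: fun_eq_iff)
  define V where "V = {\<nu>::(real set \<Rightarrow> real) \<Rightarrow> real. \<nu> f \<in> ball (\<mu> f) (dist (\<mu> f) (mu j f))}"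
  have "open V" unfolding V_def by (rule open_coord) simp
  moreover have "\<mu> \<in> V" using f by (simp add: V_def)
  ultimately obtain y where "y \<in> range mu" "y \<in> U \<inter> V" "y \<noteq> \<mu>"
    using assms unfolding islimpt_def by (meson IntI open_Int)
  moreover have "mu j \<notin> V" by (simp add: V_def dist_commute)
  ultimately show ?thesis by auto
qed

theorem proposition6p1:
  fixes mu :: "nat \<Rightarrow> ((real set \<Rightarrow> real) \<Rightarrow> real)"
    and E :: "nat \<Rightarrow> real set set"
  assumes "\<And>i. mu i \<in> PrT"
    and "\<And>i. conv (mu i) (mu i) = mu i"
    and "\<And>j. E j \<subseteq> TT"
    and "\<And>i j. meas (mu i) (E j) = (if i = j then 1 else 0)"
  shows "\<forall>\<mu>\<in>PrT. \<mu> islimpt range mu \<longrightarrow> conv \<mu> \<mu> \<noteq> \<mu>"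
proof (intro ballI impI notI)
  fix \<mu> assume muP: "\<mu> \<in> PrT" and lim: "\<mu> islimpt range mu" and idem: "conv \<mu> \<mu> = \<mu>"
  define F where "F j = E j - (\<Union>k<j. E k)" for j
  have FT: "\<And>j. F j \<subseteq> TT" using assms(3) by (auto simp: F_def)
  have disj: "j = k" if a1: "x \<in> F j" and a2: "x \<in> F k" for x j k
  proof (rule ccontr)
    assume a3: "j \<noteq> k"
    show False
    proof (cases "j < k")
      case True
      then show False using a1 a2 unfolding F_def by blast
    next
      case False
      then have "k < j" using a3 by simp
      then show False using a1 a2 unfolding F_def by blast
    qed
  qed
  have FE: "F j \<subseteq> E j" for j unfolding F_def by blast
  have Fi0: "meas (mu i) (F j) = 0" if "i \<noteq> j" for i j
  proof -
    have "meas (mu i) (F j) \<le> meas (mu i) (E j)" by (rule meas_mono[OF assms(1) FE assms(3)])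
    moreover have "meas (mu i) (F j) \<ge> 0" by (rule meas_ge0[OF assms(1) FT])
    moreover have "meas (mu i) (E j) = 0" using assms(4)[of i j] that by simp
    ultimately show ?thesis by linarith
  qed
  have Fi1: "meas (mu i) (F i) = 1" for i
  proof -
    have s1: "E i \<subseteq> F i \<union> (\<Union>k<i. E k)" unfolding F_def by blast
    have s2: "F i \<union> (\<Union>k<i. E k) \<subseteq> TT" using FT assms(3) by blast
    have s3: "(\<Union>k<i. E k) \<subseteq> TT" using assms(3) by blast
    have "1 = meas (mu i) (E i)" using assms(4) by simp
    also have "\<dots> \<le> meas (mu i) (F i \<union> (\<Union>k<i. E k))"
      by (rule meas_mono[OF assms(1) s1 s2])
    also have "\<dots> \<le> meas (mu i) (F i) + meas (mu i) (\<Union>k<i. E k)"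
      by (rule meas_Un[OF assms(1) FT s3])
    also have "meas (mu i) (\<Union>k<i. E k) \<le> (\<Sum>k<i. meas (mu i) (E k))"
      by (rule meas_UN[OF assms(1) assms(3)])
    also have "(\<Sum>k<i. meas (mu i) (E k)) = 0" using assms(4) by simp
    finally have "1 \<le> meas (mu i) (F i)" by simp
    moreover have "meas (mu i) (F i) \<le> meas (mu i) (E i)" by (rule meas_mono[OF assms(1) FE assms(3)])
    ultimately show ?thesis using assms(4)[of i i] by simp
  qed
  have muF: "\<mu> (indicator (F j)) = 0" for j
  proof (rule ccontr)
    assume c: "\<mu> (indicator (F j)) \<noteq> 0"
    define c where "c = \<mu> (indicator (F j))"
    have "open {\<nu>::(real set \<Rightarrow> real) \<Rightarrow> real. \<nu> (indicator (F j)) \<in> ball c \<bar>c\<bar>}"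
      by (rule open_coord) simp
    moreover have "\<mu> \<in> {\<nu>. \<nu> (indicator (F j)) \<in> ball c \<bar>c\<bar>}" using c by (simp add: c_def)
    ultimately obtain i where "i \<noteq> j" "mu i (indicator (F j)) \<in> ball c \<bar>c\<bar>"
      using limpt_avoid[OF lim] by blast
    then show False using Fi0[of i j] by (simp add: meas_def dist_real_def)
  qed
  define G where "G = {hat u v | u v j. u \<in> F j \<and> v \<in> F j}"
  have "\<mu> (indicator G) = 0"
  proof -
    have "(\<lambda>x. if x \<in> TT then \<mu> (\<lambda>y. if \<exists>j. x \<in> F j \<and> y \<in> F j then 1 else 0) else 0) = (\<lambda>_. 0)"
    proof
      fix x
      show "(if x \<in> TT then \<mu> (\<lambda>y. if \<exists>j. x \<in> F j \<and> y \<in> F j then 1 else 0) else 0) = 0"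
      proof (cases "\<exists>j. x \<in> F j")
        case True
        then obtain j where j: "x \<in> F j" by blast
        show ?thesis using inner_ind[of F, OF disj j] muF[of j] by simp
      next
        case False
        then show ?thesis using inner_zero[of x F] PrT_zero[OF muP] by simp
      qed
    qed
    moreover have "conv \<mu> \<mu> (indicator G) = \<mu> (\<lambda>x. if x \<in> TT then \<mu> (\<lambda>y. if \<exists>j. x \<in> F j \<and> y \<in> F j then 1 else 0) else 0)"
      unfolding G_def by (rule conv_G[OF muP FT disj])
    ultimately have "conv \<mu> \<mu> (indicator G) = 0" using PrT_zero[OF muP] by simp
    then show ?thesis using idem by simp
  qed
  moreover have "mu i (indicator G) = 1" for i
  proof -
    have "(\<lambda>x. if x \<in> TT then mu i (\<lambda>y. if \<exists>j. x \<in> F j \<and> y \<in> F j then 1 else 0) else 0) = indicator (F i)"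
    proof
      fix x
      show "(if x \<in> TT then mu i (\<lambda>y. if \<exists>j. x \<in> F j \<and> y \<in> F j then 1 else 0) else 0) = indicator (F i) x"
      proof (cases "\<exists>j. x \<in> F j")
        case True
        then obtain j where j: "x \<in> F j" by blast
        have xT: "x \<in> TT" using FT j by blast
        show ?thesis
        proof (cases "i = j")
          case True
          then show ?thesis using xT inner_ind[of F, OF disj j] Fi1[of i] j by (simp add: meas_def)
        next
          case False
          then have "x \<notin> F i" using disj[of x i j] j by blast
          then show ?thesis using xT inner_ind[of F, OF disj j] Fi0[of i j] False by (simp add: meas_def)
        qed
      next
        case False
        then have "x \<notin> F i" by blast
        then show ?thesis using False inner_zero[of x F] PrT_zero[OF assms(1)] by simp
      qed
    qed
    moreover have "conv (mu i) (mu i) (indicator G) = mu i (\<lambda>x. if x \<in> TT then mu i (\<lambda>y. if \<exists>j. x \<in> F j \<and> y \<in> F j then 1 else 0) else 0)"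
      unfolding G_def by (rule conv_G[OF assms(1) FT disj])
    ultimately have "conv (mu i) (mu i) (indicator G) = 1" using Fi1[of i] by (simp add: meas_def)
    then show ?thesis using assms(2)[of i] by simp
  qed
  moreover have op: "open {\<nu>::(real set \<Rightarrow> real) \<Rightarrow> real. \<nu> (indicator G) \<in> ball 0 (1/2)}"
    by (rule open_coord) simp
  ultimately have mem: "\<mu> \<in> {\<nu>::(real set \<Rightarrow> real) \<Rightarrow> real. \<nu> (indicator G) \<in> ball 0 (1/2)}" by simp
  obtain i where "i \<noteq> 0" "mu i \<in> {\<nu>::(real set \<Rightarrow> real) \<Rightarrow> real. \<nu> (indicator G) \<in> ball 0 (1/2)}"
    using limpt_avoid[OF lim op mem] by blast
  then show False using \<open>\<And>i. mu i (indicator G) = 1\<close>[of i] by simp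
qed

end
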